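(* Let $m>0$, $w>v>0$ and $s,u\geq 0$. Let $\mathfrak{n}$ be the five-dimensional real Lie algebra with basis $\{E_1,\dots,E_5\}$ whose only non-vanishing brackets (up to antisymmetry) are $$[E_1,E_2]=mE_3+sE_4+uE_5,\qquad [E_1,E_3]=vE_4,\qquad [E_2,E_3]=wE_5.$$ Equip the corresponding simply connected nilpotent Lie group with the left-invariant Riemannian metric for which $\{E_1,\dots,E_5\}$ is orthonormal. Then this metric is not an algebraic Ricci soliton.
   Context: Let $G$ be a Lie group with Lie algebra $\mathfrak{g}$ and let $g$ be a left-invariant Riemannian metric on $G$. Let $\mathrm{Ric}$ denote the $(1,1)$ Ricci tensor of $g$, viewed as a linear endomorphism of $\mathfrak{g}$. The metric $g$ is an algebraic Ricci soliton if there are a real number $c$ and a derivation $D$ of $\mathfrak{g}$ such that $\mathrm{Ric}=c\,\mathrm{Id}+D$. *)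

theory Defs
  imports "HOL-Analysis.Analysis"
begin

text \<open>Metric Lie algebras: the Lie algebra of a Lie group is modelled on real^'n,
  with a bracket br; the left-invariant metric is the standard inner product
  (so the standard basis is orthonormal).\<close>

text \<open>Levi-Civita connection on left-invariant fields (Koszul formula):
  2 g(nabla_X Y, Z) = g([X,Y],Z) - g([Y,Z],X) + g([Z,X],Y).\<close>
definition lc_conn :: "(real^'n \<Rightarrow> real^'n \<Rightarrow> real^'n) \<Rightarrow> real^'n \<Rightarrow> real^'n \<Rightarrow> real^'n"
  where "lc_conn br X Y = (\<chi> k. (1/2) * (br X Y \<bullet> axis k 1 - br Y (axis k 1) \<bullet> X
                                     + br (axis k 1) X \<bullet> Y))"

definition curv :: "(real^'n \<Rightarrow> real^'n \<Rightarrow> real^'n) \<Rightarrow> real^'n \<Rightarrow> real^'n \<Rightarrow> real^'n \<Rightarrow> real^'n"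
  where "curv br X Y Z = lc_conn br X (lc_conn br Y Z) - lc_conn br Y (lc_conn br X Z)
                         - lc_conn br (br X Y) Z"

definition ricci_form :: "(real^'n \<Rightarrow> real^'n \<Rightarrow> real^'n) \<Rightarrow> real^'n \<Rightarrow> real^'n \<Rightarrow> real"
  where "ricci_form br X Y = (\<Sum>i\<in>UNIV. curv br (axis i 1) X Y \<bullet> axis i 1)"

definition ricci_op :: "(real^'n \<Rightarrow> real^'n \<Rightarrow> real^'n) \<Rightarrow> real^'n \<Rightarrow> real^'n"
  where "ricci_op br X = (\<chi> k. ricci_form br X (axis k 1))"

definition is_derivation :: "(real^'n \<Rightarrow> real^'n \<Rightarrow> real^'n) \<Rightarrow> (real^'n \<Rightarrow> real^'n) \<Rightarrow> bool"
  where "is_derivation br D \<longleftrightarrow> linear D \<and>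
           (\<forall>X Y. D (br X Y) = br (D X) Y + br X (D Y))"

definition algebraic_ricci_soliton :: "(real^'n \<Rightarrow> real^'n \<Rightarrow> real^'n) \<Rightarrow> bool"
  where "algebraic_ricci_soliton br \<longleftrightarrow>
           (\<exists>c D. is_derivation br D \<and> (\<forall>X. ricci_op br X = c *\<^sub>R X + D X))"

text \<open>The concrete five-dimensional algebra. Basis vector E_i (i = 1..5) is the
  standard basis vector with index of_nat (i - 1) of the numeral type 5.\<close>
definition bas :: "nat \<Rightarrow> real^5"
  where "bas i = axis (of_nat (i - 1)) 1"

definition n5_tab :: "real \<Rightarrow> real \<Rightarrow> real \<Rightarrow> real \<Rightarrow> real \<Rightarrow> nat \<Rightarrow> nat \<Rightarrow> real^5"
  where "n5_tab m s u v w i j =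
     (if (i, j) = (1, 2) then m *\<^sub>R bas 3 + s *\<^sub>R bas 4 + u *\<^sub>R bas 5
      else if (i, j) = (2, 1) then - (m *\<^sub>R bas 3 + s *\<^sub>R bas 4 + u *\<^sub>R bas 5)
      else if (i, j) = (1, 3) then v *\<^sub>R bas 4
      else if (i, j) = (3, 1) then - (v *\<^sub>R bas 4)
      else if (i, j) = (2, 3) then w *\<^sub>R bas 5
      else if (i, j) = (3, 2) then - (w *\<^sub>R bas 5)
      else 0)"

definition n5_br :: "real \<Rightarrow> real \<Rightarrow> real \<Rightarrow> real \<Rightarrow> real \<Rightarrow> real^5 \<Rightarrow> real^5 \<Rightarrow> real^5"
  where "n5_br m s u v w X Y =
     (\<Sum>i\<in>{1..5}. \<Sum>j\<in>{1..5}. ((X \<bullet> bas i) * (Y \<bullet> bas j)) *\<^sub>R n5_tab m s u v w i j)"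

end

theory Submission imports Defs begin

lemma exhaust_5: fixes x :: 5 shows "x = 0 \<or> x = 1 \<or> x = 2 \<or> x = 3 \<or> x = 4"
proof (induct x)
  case (of_int z)
  then have "z = 0 \<or> z = 1 \<or> z = 2 \<or> z = 3 \<or> z = 4" by fastforce
  then show ?case by auto
qed

lemma UNIV_5: "UNIV = {0,1,2,3,4::5}" using exhaust_5 by auto

lemma sum_5: "sum f (UNIV::5 set) = f 0 + f 1 + f 2 + f 3 + f 4"
  unfolding UNIV_5 by (simp add: ac_simps)

lemma ax5: "axis i (1::real) $ j = (if j = i then 1 else 0)" by (simp add: axis_def)

lemma br_comp: "n5_br m s u v w X Y $ k =
  (if k = 2 then m*(X$0*Y$1 - X$1*Y$0)
   else if k = 3 then s * (X$0 * Y$1 - X$1 * Y$0) + v * (X$0 * Y$2 - X$2 * Y$0)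
   else if k = 4 then u*(X$0*Y$1 - X$1*Y$0) + w*(X$1*Y$2 - X$2*Y$1) else 0)"
  using exhaust_5[of k]
  by (auto simp: n5_br_def n5_tab_def bas_def numeral_eq_Suc inner_axis ax5 algebra_simps)

lemma lc_comp: "lc_conn br X Y $ k = (1/2) * (br X Y $ k - (\<Sum>j\<in>UNIV. br Y (axis k 1) $ j * X $ j)
   + (\<Sum>j\<in>UNIV. br (axis k 1) X $ j * Y $ j))"
  by (simp add: lc_conn_def inner_vec_def ax5 if_distrib cong: if_cong)

lemma ric_comp: "ricci_op br X $ k = (\<Sum>i\<in>UNIV. curv br (axis i 1) X (axis k 1) $ i)"
  by (simp add: ricci_op_def ricci_form_def inner_axis)

lemma curv_comp: "curv br X Y Z $ i = lc_conn br X (lc_conn br Y Z) $ i - lc_conn br Y (lc_conn br X Z) $ i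
  - lc_conn br (br X Y) Z $ i"
  by (simp add: curv_def)

lemma ric21: "ricci_op (n5_br m s u v w) (axis 2 1) $ 1 = - s * v / 2"
  by (simp add: ric_comp curv_comp lc_comp br_comp sum_5 ax5 field_simps power2_eq_square)

lemma ric31: "ricci_op (n5_br m s u v w) (axis 3 1) $ 1 = 0"
  by (simp add: ric_comp curv_comp lc_comp br_comp sum_5 ax5 field_simps power2_eq_square)

lemma ric41: "ricci_op (n5_br m s u v w) (axis 4 1) $ 1 = 0"
  by (simp add: ric_comp curv_comp lc_comp br_comp sum_5 ax5 field_simps power2_eq_square)

lemma ric33: "ricci_op (n5_br m s u v w) (axis 3 1) $ 3 = (s^2 + v^2) / 2"
  by (simp add: ric_comp curv_comp lc_comp br_comp sum_5 ax5 field_simps power2_eq_square)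

lemma ric00: "ricci_op (n5_br m s u v w) (axis 0 1) $ 0 = - (m^2 + s^2 + u^2 + v^2) / 2"
  by (simp add: ric_comp curv_comp lc_comp br_comp sum_5 ax5 field_simps power2_eq_square)

lemma ric22: "ricci_op (n5_br m s u v w) (axis 2 1) $ 2 = (m^2 - v^2 - w^2) / 2"
  by (simp add: ric_comp curv_comp lc_comp br_comp sum_5 ax5 field_simps power2_eq_square)

lemma ric20: "ricci_op (n5_br m s u v w) (axis 2 1) $ 0 = u * w / 2"
  by (simp add: ric_comp curv_comp lc_comp br_comp sum_5 ax5 field_simps power2_eq_square)

lemma ric44: "ricci_op (n5_br m s u v w) (axis 4 1) $ 4 = (u^2 + w^2) / 2"
  by (simp add: ric_comp curv_comp lc_comp br_comp sum_5 ax5 field_simps power2_eq_square)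

lemma ric11: "ricci_op (n5_br m s u v w) (axis 1 1) $ 1 = - (m^2 + s^2 + u^2 + w^2) / 2"
  by (simp add: ric_comp curv_comp lc_comp br_comp sum_5 ax5 field_simps power2_eq_square)


lemma br_basis:
  "n5_br m s u v w (axis 0 1) (axis 1 1) = m *\<^sub>R axis 2 1 + s *\<^sub>R axis 3 1 + u *\<^sub>R axis 4 1"
  "n5_br m s u v w (axis 0 1) (axis 2 1) = v *\<^sub>R axis 3 1"
  "n5_br m s u v w (axis 1 1) (axis 2 1) = w *\<^sub>R axis 4 1"
  by (simp_all add: vec_eq_iff br_comp ax5)

theorem mainTheorem9:
  fixes m s u v w :: real
  assumes "m > 0" and "w > v" and "v > 0" and "s \<ge> 0" and "u \<ge> 0"
  shows "\<not> algebraic_ricci_soliton (n5_br m s u v w)"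
proof
  let ?br = "n5_br m s u v w"
  assume "algebraic_ricci_soliton ?br"
  then obtain c D where der: "is_derivation ?br D" and R: "\<And>X. ricci_op ?br X = c *\<^sub>R X + D X"
    unfolding algebraic_ricci_soliton_def by blast
  from der have lin: "linear D" and dd: "\<And>X Y. D (?br X Y) = ?br (D X) Y + ?br X (D Y)"
    unfolding is_derivation_def by auto
  have Dc: "D X $ k = ricci_op ?br X $ k - c * X $ k" for X k
    using R[of X] by (simp add: vec_eq_iff)
  have Dl: "D (a *\<^sub>R X + b *\<^sub>R Y + d *\<^sub>R Z) = a *\<^sub>R D X + b *\<^sub>R D Y + d *\<^sub>R D Z" for a b d X Y Z
    using lin by (simp add: linear_add linear_cmul)
  have Dl1: "D (a *\<^sub>R X) = a *\<^sub>R D X" for a X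
    using lin by (simp add: linear_cmul)
  have A: "D (?br (axis 0 1) (axis 1 1)) $ 1 = (?br (D (axis 0 1)) (axis 1 1) + ?br (axis 0 1) (D (axis 1 1))) $ 1"
    using dd by simp
  have A': "m * (- s * v / 2) = 0"
    using A unfolding br_basis Dl by (simp add: Dc ric21 ric31 ric41 br_comp ax5)
  have s0: "s = 0" using A' assms by simp
  have B: "D (?br (axis 0 1) (axis 2 1)) $ 3 = (?br (D (axis 0 1)) (axis 2 1) + ?br (axis 0 1) (D (axis 2 1))) $ 3"
    using dd by simp
  have B': "v * ((s^2 + v^2) / 2 - c) = v * (- (m^2 + s^2 + u^2 + v^2) / 2 - c) + s * (- s * v / 2)
      + v * ((m^2 - v^2 - w^2) / 2 - c)"
    using B unfolding br_basis Dl1 by (simp add: Dc ric33 ric00 ric21 ric22 br_comp ax5 algebra_simps)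
  have C: "D (?br (axis 1 1) (axis 2 1)) $ 4 = (?br (D (axis 1 1)) (axis 2 1) + ?br (axis 1 1) (D (axis 2 1))) $ 4"
    using dd by simp
  have C': "w * ((u^2 + w^2) / 2 - c) = w * (- (m^2 + s^2 + u^2 + w^2) / 2 - c) - u * (u * w / 2)
      + w * ((m^2 - v^2 - w^2) / 2 - c)"
    using C unfolding br_basis Dl1 by (simp add: Dc ric44 ric11 ric20 ric22 br_comp ax5 algebra_simps)
  have "v * ((s^2+v^2)/2 - c) = v * ((-(m^2+s^2+u^2+v^2)/2 - c) + ((m^2-v^2-w^2)/2 - c))"
    using B' s0 by (simp only: distrib_left mult_zero_left add_0_right)
  then have "(s^2+v^2)/2 - c = (-(m^2+s^2+u^2+v^2)/2 - c) + ((m^2-v^2-w^2)/2 - c)"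
    using \<open>v > 0\<close> by simp
  then have c1: "c = - (u^2 + 3 * v^2 + w^2) / 2" using s0 by (simp add: field_simps)
  have "w * ((u^2 + w^2) / 2 - c) = w * ((- (m^2 + s^2 + u^2 + w^2) / 2 - c) - u^2 / 2 + ((m^2 - v^2 - w^2) / 2 - c))"
    using C' by (simp add: algebra_simps power2_eq_square)
  then have "(u^2 + w^2) / 2 - c = (- (m^2 + s^2 + u^2 + w^2) / 2 - c) - u^2 / 2 + ((m^2 - v^2 - w^2) / 2 - c)"
    using \<open>w > v\<close> \<open>v > 0\<close> by simp
  then have c2: "c = - (3 * u^2 + v^2 + 3 * w^2) / 2" using s0 by (simp add: field_simps)
  have "v^2 = u^2 + w^2" using c1 c2 by simp
  moreover have "v^2 < w^2" using assms by (simp add: power_strict_mono)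
  ultimately show False by (smt (verit) zero_le_power2)
qed

end
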